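(* For all positive integers $k,t$, with $\mathcal{W}$ the weight partition of $\mathbb{F}_q^k$, $$\frac{2q}{(k+1)^2(q-1)-a(q-a)}\,S_{k,t}\;\le\; r_{\mathcal{W}}(k,t)\;\le\; N_q\big(\min(2t+1,k+1),\,2t\big),$$ where $a=(k+1)\bmod q$ and $$S_{k,t}=\begin{cases}\dfrac{k(k+1)(6t+1-k)}{6}, & k\le 2t,\\[4pt] \dfrac{t(2t+1)(3k-2t+1)}{3}, & k\ge 2t.\end{cases}$$
   Context: $\mathcal{W}=\{W_0,\ldots,W_k\}$ with $W_i=\{u\in\mathbb{F}_q^k:\mathrm{wt}(u)=i\}$ (Hamming weight). A $(\mathcal{P},t)$-encoding with redundancy $r$ is a systematic map $\mathcal{C}:\mathbb{F}_q^k\to\mathbb{F}_q^{k+r}$, $\mathcal{C}(u)=(u,p(u))$, with Hamming distance $d(\mathcal{C}(u),\mathcal{C}(v))\ge 2t+1$ whenever $u,v$ lie in different blocks of $\mathcal{P}$; $r_{\mathcal{P}}(k,t)$ is the minimum such $r$. $N_q(M,d)$ denotes the minimum length of a $q$-ary code with $M$ codewords and minimum Hamming distance $d$. *)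

theory Defs
  imports Complex_Main "HOL-Library.Cardinality"
begin

text \<open>Vectors of F_q^k are represented as lists of length k over a finite field 'a.\<close>

definition hamming_dist :: "'a list \<Rightarrow> 'a list \<Rightarrow> nat" where
  "hamming_dist u v = card {i. i < length u \<and> u ! i \<noteq> v ! i}"

definition hamming_wt :: "'a::zero list \<Rightarrow> nat" where
  "hamming_wt u = length (filter (\<lambda>x. x \<noteq> 0) u)"

definition weight_partition :: "nat \<Rightarrow> 'a::zero list set set" where
  "weight_partition k = {{u. length u = k \<and> hamming_wt u = i} | i. i \<le> k}"

text \<open>A (P,t)-encoding with redundancy r: systematic map u \<mapsto> (u, p u), p u of length r.\<close>
definition is_PT_encoding ::
  "'a list set set \<Rightarrow> nat \<Rightarrow> nat \<Rightarrow> nat \<Rightarrow> ('a list \<Rightarrow> 'a list) \<Rightarrow> bool" where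
  "is_PT_encoding P k t r p \<longleftrightarrow>
     (\<forall>u. length u = k \<longrightarrow> length (p u) = r) \<and>
     (\<forall>u v. length u = k \<and> length v = k \<and> \<not> (\<exists>B\<in>P. u \<in> B \<and> v \<in> B) \<longrightarrow>
        2 * t + 1 \<le> hamming_dist (u @ p u) (v @ p v))"

definition r_P :: "'a list set set \<Rightarrow> nat \<Rightarrow> nat \<Rightarrow> nat" where
  "r_P P k t = (LEAST r. \<exists>p. is_PT_encoding P k t r p)"

definition N_q :: "'a itself \<Rightarrow> nat \<Rightarrow> nat \<Rightarrow> nat" where
  "N_q _ M d = (LEAST n. \<exists>C :: 'a list set. C \<subseteq> {u. length u = n} \<and> card C = M \<and>
       (\<forall>x\<in>C. \<forall>y\<in>C. x \<noteq> y \<longrightarrow> d \<le> hamming_dist x y))"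

definition S_kt :: "nat \<Rightarrow> nat \<Rightarrow> real" where
  "S_kt k t = (if k \<le> 2 * t
     then real k * (real k + 1) * (6 * real t + 1 - real k) / 6
     else real t * (2 * real t + 1) * (3 * real k - 2 * real t + 1) / 3)"

end

theory Submission
  imports Defs
begin


lemma ind_card: fixes N :: nat and f :: "nat \<Rightarrow> 'b" shows "(\<Sum>i<N. if f i = s then 1 else 0 :: real) = real (card {i. i<N \<and> f i = s})"
proof (induction N)
  case 0 then show ?case by simp
next
  case (Suc N)
  have "{i. i<Suc N \<and> f i = s} = {i. i<N \<and> f i = s} \<union> (if f N = s then {N} else {})" by (auto simp: less_Suc_eq)
  then show ?case using Suc by (simp add: card_insert_if)
qed

lemma pair_count:
  fixes f :: "nat \<Rightarrow> 'a::finite"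
  shows "real CARD('a) * (\<Sum>i<N. \<Sum>j<N. if f i \<noteq> f j then 1 else 0)
     \<le> real (N^2 * (CARD('a) - 1)) - real ((N mod CARD('a)) * (CARD('a) - N mod CARD('a)))"
proof -
  define q where "q = CARD('a)"
  define m where "m = N div q"
  define a where "a = N mod q"
  have q1: "q \<ge> 1" unfolding q_def by (simp add: Suc_leI)
  have aq: "a \<le> q" unfolding a_def using q1 by simp
  have Nq: "N = q*m + a" unfolding m_def a_def by simp
  define n where "n s = (\<Sum>i<N. if f i = s then 1 else 0 :: real)" for s
  have ncard: "n s = real (card {i. i<N \<and> f i = s})" for s unfolding n_def by (rule ind_card)
  have eq1: "(\<Sum>i<N. \<Sum>j<N. if f i = f j then 1 else 0 :: real) = (\<Sum>s\<in>UNIV. n s ^ 2)"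
  proof -
    have "(\<Sum>s\<in>UNIV. n s ^ 2) = (\<Sum>s\<in>UNIV. \<Sum>i<N. \<Sum>j<N. (if f i = s then 1 else 0 :: real) * (if f j = s then 1 else 0))"
      unfolding n_def power2_eq_square sum_product by simp
    also have "\<dots> = (\<Sum>i<N. \<Sum>j<N. \<Sum>s\<in>UNIV. (if f i = s then 1 else 0 :: real) * (if f j = s then 1 else 0))"
      by (simp add: sum.swap[of _ UNIV] )
    also have "\<dots> = (\<Sum>i<N. \<Sum>j<N. if f i = f j then 1 else 0 :: real)"
    proof (intro sum.cong refl)
      fix i j
      have "(\<Sum>s\<in>UNIV. (if f i = s then 1 else 0 :: real) * (if f j = s then 1 else 0))
         = (\<Sum>s\<in>UNIV. if s = f i then (if f j = f i then 1 else 0) else 0 :: real)"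
        by (intro sum.cong) auto
      then show "(\<Sum>s\<in>UNIV. (if f i = s then 1 else 0 :: real) * (if f j = s then 1 else 0)) = (if f i = f j then 1 else 0)"
        by (simp add: sum.delta)
    qed
    finally show ?thesis by simp
  qed
  have eq2: "(\<Sum>s\<in>UNIV. n s) = real N"
  proof -
    have "(\<Sum>s\<in>UNIV. n s) = (\<Sum>i<N. \<Sum>s\<in>UNIV. if s = f i then 1 else 0 :: real)"
      unfolding n_def by (subst sum.swap) (intro sum.cong refl, metis)
    also have "\<dots> = real N" by (simp add: sum.delta)
    finally show ?thesis .
  qed
  have pt: "(n s - real m) * (n s - real m - 1) \<ge> 0" for s
  proof (cases "card {i. i<N \<and> f i = s} \<le> m")
    case True
    then show ?thesis unfolding ncard by (intro mult_nonpos_nonpos) auto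
  next
    case False
    then show ?thesis unfolding ncard by (intro mult_nonneg_nonneg) auto
  qed
  have "0 \<le> (\<Sum>s\<in>UNIV. (n s - real m) * (n s - real m - 1))" by (intro sum_nonneg pt)
  also have "\<dots> = (\<Sum>s\<in>UNIV. n s ^ 2) - (2 * real m + 1) * (\<Sum>s\<in>UNIV. n s) + real q * real m * (real m + 1)"
    proof -
    have "(\<Sum>s\<in>UNIV. (n s - real m) * (n s - real m - 1)) = (\<Sum>s\<in>UNIV. n s ^ 2 - (2 * real m + 1) * n s + real m * (real m + 1))"
      by (intro sum.cong) (auto simp: algebra_simps power2_eq_square)
    also have "\<dots> = (\<Sum>s\<in>UNIV. n s ^ 2) - (2 * real m + 1) * (\<Sum>s\<in>UNIV. n s) + real q * real m * (real m + 1)"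
      by (simp add: sum.distrib sum_subtractf sum_distrib_left[symmetric] q_def)
    finally show ?thesis .
  qed
  finally have ineq: "(\<Sum>s\<in>UNIV. n s ^ 2) \<ge> (2 * real m + 1) * real N - real q * real m * (real m + 1)"
    using eq2 by simp
  have neq: "(\<Sum>i<N. \<Sum>j<N. if f i \<noteq> f j then 1 else 0 :: real) = real N ^ 2 - (\<Sum>i<N. \<Sum>j<N. if f i = f j then 1 else 0 :: real)"
  proof -
    have "(\<Sum>i<N. \<Sum>j<N. if f i \<noteq> f j then 1 else 0 :: real) = (\<Sum>i<N. \<Sum>j<N. 1 - (if f i = f j then 1 else 0 :: real))"
      by (intro sum.cong) auto
    then show ?thesis by (simp add: sum_subtractf power2_eq_square)
  qed
  have NR: "real N = real q * real m + real a" using Nq by simp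
  have k1: "real q * (\<Sum>s\<in>UNIV. n s ^ 2) \<ge> real q * ((2 * real m + 1) * real N - real q * real m * (real m + 1))"
    using ineq by (intro mult_left_mono) auto
  have k2: "real q * ((2 * real m + 1) * real N - real q * real m * (real m + 1)) = real N ^ 2 + real a * (real q - real a)"
    unfolding NR by (simp add: algebra_simps power2_eq_square)
  have "real q * (\<Sum>i<N. \<Sum>j<N. if f i \<noteq> f j then 1 else 0) \<le> real q * real N ^ 2 - real N ^ 2 - real a * (real q - real a)"
    unfolding neq eq1 using k1 k2 by (simp add: right_diff_distrib)
  moreover have "real (N^2 * (q - 1)) - real (a * (q - a)) = real q * real N ^ 2 - real N ^ 2 - real a * (real q - real a)"
    using q1 aq by (simp add: of_nat_diff algebra_simps)
  ultimately show ?thesis unfolding q_def a_def by simp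
qed



definition stair :: "nat \<Rightarrow> nat \<Rightarrow> 'a::zero_neq_one list" where
  "stair n i = map (\<lambda>c. if c < i then 1 else 0) [0..<n]"

lemma stair_len[simp]: "length (stair n i) = n" by (simp add: stair_def)

lemma stair_dist: "i \<le> j \<Longrightarrow> j \<le> n \<Longrightarrow> hamming_dist (stair n i :: 'a::zero_neq_one list) (stair n j) = j - i"
proof -
  assume a: "i \<le> j" "j \<le> n"
  have "{c. c < length (stair n i :: 'a list) \<and> (stair n i :: 'a list) ! c \<noteq> stair n j ! c} = {i..<j}"
    using a by (auto simp: stair_def split: if_splits)
  then show ?thesis unfolding hamming_dist_def by simp
qed

lemma stair_wt: "i \<le> n \<Longrightarrow> hamming_wt (stair n i :: 'a::zero_neq_one list) = i"
proof -
  assume a: "i \<le> n"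
  have "{c. c < length (stair n i :: 'a list) \<and> (stair n i :: 'a list) ! c \<noteq> 0} = {..<i}"
    using a by (auto simp: stair_def split: if_splits)
  then show ?thesis unfolding hamming_wt_def length_filter_conv_card by simp
qed

lemma hd_sym: "length u = length v \<Longrightarrow> hamming_dist u v = hamming_dist v u"
  unfolding hamming_dist_def by metis

lemma hd_append: "length u = length v \<Longrightarrow> length x = length y \<Longrightarrow>
  hamming_dist (u @ x) (v @ y) = hamming_dist u v + hamming_dist x y"
proof -
  assume l: "length u = length v" "length x = length y"
  let ?n = "length u"
  have "{i. i < length (u @ x) \<and> (u @ x) ! i \<noteq> (v @ y) ! i}
     = {i. i < length u \<and> u ! i \<noteq> v ! i} \<union> (\<lambda>i. i + ?n) ` {i. i < length x \<and> x ! i \<noteq> y ! i}"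
  proof (intro set_eqI iffI)
    fix i assume i: "i \<in> {i. i < length (u @ x) \<and> (u @ x) ! i \<noteq> (v @ y) ! i}"
    show "i \<in> {i. i < length u \<and> u ! i \<noteq> v ! i} \<union> (\<lambda>i. i + ?n) ` {i. i < length x \<and> x ! i \<noteq> y ! i}"
    proof (cases "i < ?n")
      case True then show ?thesis using i l by (auto simp: nth_append)
    next
      case False
      then have "i = (i - ?n) + ?n" by simp
      moreover have "i - ?n \<in> {i. i < length x \<and> x ! i \<noteq> y ! i}" using i l False by (auto simp: nth_append)
      ultimately show ?thesis by blast
    qed
  next
    fix i assume "i \<in> {i. i < length u \<and> u ! i \<noteq> v ! i} \<union> (\<lambda>i. i + ?n) ` {i. i < length x \<and> x ! i \<noteq> y ! i}"
    then show "i \<in> {i. i < length (u @ x) \<and> (u @ x) ! i \<noteq> (v @ y) ! i}" using l by (auto simp: nth_append)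
  qed
  moreover have "card ({i. i < length u \<and> u ! i \<noteq> v ! i} \<union> (\<lambda>i. i + ?n) ` {i. i < length x \<and> x ! i \<noteq> y ! i})
     = card {i. i < length u \<and> u ! i \<noteq> v ! i} + card ((\<lambda>i. i + ?n) ` {i. i < length x \<and> x ! i \<noteq> y ! i})"
    by (intro card_Un_disjoint) auto
  moreover have "card ((\<lambda>i. i + ?n) ` {i. i < length x \<and> x ! i \<noteq> y ! i}) = card {i. i < length x \<and> x ! i \<noteq> y ! i}"
    by (intro card_image) (auto simp: inj_on_def)
  ultimately show ?thesis unfolding hamming_dist_def by simp
qed

lemma hd_sum: "hamming_dist u v = (\<Sum>c<length u. if u ! c \<noteq> v ! c then 1 else 0)"
proof -
  have g: "(\<Sum>c<n. if P c then 1 else 0) = card {c. c < n \<and> P c}" for n and P :: "nat \<Rightarrow> bool"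
  proof (induction n)
    case (Suc n)
    have "{c. c < Suc n \<and> P c} = {c. c < n \<and> P c} \<union> (if P n then {n} else {})" by (auto simp: less_Suc_eq)
    then show ?case using Suc by (simp add: card_insert_if)
  qed simp
  show ?thesis unfolding hamming_dist_def g ..
qed

lemma wt_le_dist: "length u = length v \<Longrightarrow> hamming_wt u \<le> hamming_wt v + hamming_dist u v"
proof -
  assume l: "length u = length v"
  have "{i. i < length u \<and> u ! i \<noteq> 0} \<subseteq> {i. i < length v \<and> v ! i \<noteq> 0} \<union> {i. i < length u \<and> u ! i \<noteq> v ! i}"
    using l by (auto)
  then have "card {i. i < length u \<and> u ! i \<noteq> 0} \<le> card ({i. i < length v \<and> v ! i \<noteq> 0} \<union> {i. i < length u \<and> u ! i \<noteq> v ! i})"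
    by (intro card_mono) (auto)
  also have "\<dots> \<le> card {i. i < length v \<and> v ! i \<noteq> 0} + card {i. i < length u \<and> u ! i \<noteq> v ! i}"
    by (rule card_Un_le)
  finally have X: "card {i. i < length u \<and> u ! i \<noteq> 0} \<le> card {i. i < length v \<and> v ! i \<noteq> 0} + card {i. i < length u \<and> u ! i \<noteq> v ! i}" .
  show ?thesis unfolding hamming_wt_def hamming_dist_def length_filter_conv_card by (rule X)
qed

lemma wt_le_len: "hamming_wt u \<le> length u"
  unfolding hamming_wt_def by simp

lemma same_block: "length u = k \<Longrightarrow> length v = k \<Longrightarrow>
   (\<exists>B\<in>weight_partition k. u \<in> B \<and> v \<in> B) \<longleftrightarrow> hamming_wt u = hamming_wt v"
proof -
  assume l: "length u = k" "length v = k"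
  show ?thesis
  proof
    assume "\<exists>B\<in>weight_partition k. u \<in> B \<and> v \<in> B"
    then obtain i where "u \<in> {u. length u = k \<and> hamming_wt u = i}" "v \<in> {u. length u = k \<and> hamming_wt u = i}"
      unfolding weight_partition_def by blast
    then show "hamming_wt u = hamming_wt v" by simp
  next
    assume e: "hamming_wt u = hamming_wt v"
    have "hamming_wt u \<le> k" using wt_le_len[of u] l by simp
    then have M: "{w. length w = k \<and> hamming_wt w = hamming_wt u} \<in> weight_partition k"
      unfolding weight_partition_def by blast
    have U: "u \<in> {w. length w = k \<and> hamming_wt w = hamming_wt u}" and V: "v \<in> {w. length w = k \<and> hamming_wt w = hamming_wt u}"
      using l e by auto
    show "\<exists>B\<in>weight_partition k. u \<in> B \<and> v \<in> B" 
      apply (rule bexI[of _ "{w. length w = k \<and> hamming_wt w = hamming_wt u}"])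
      using U V M by auto
  qed
qed



definition hh :: "nat \<Rightarrow> nat \<Rightarrow> nat \<Rightarrow> real" where
  "hh t i j = (if i = j then 0 else real (2*t+1 - (if i \<le> j then j - i else i - j)))"

lemma G_closed: "(\<Sum>d<n. real (2*t - d)) = (if n \<le> 2*t then real n * (2*t) - real n * (real n - 1)/2 else real t * (2*t+1))"
proof (induction n)
  case 0 then show ?case by simp
next
  case (Suc n)
  show ?case
  proof (cases "Suc n \<le> 2*t")
    case True
    then have "n \<le> 2*t" by simp
    with Suc True show ?thesis by (simp add: of_nat_diff field_simps)
  next
    case False
    show ?thesis
    proof (cases "n = 2*t")
      case True
      with Suc show ?thesis by (simp add: field_simps)
    next
      case False2: False
      with False Suc show ?thesis by simp
    qed
  qed
qed

lemma G_col: "(\<Sum>i<n. hh t i n) = (\<Sum>d<n. real (2*t - d))"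
proof -
  have "(\<Sum>i<n. hh t i n) = (\<Sum>i<n. real (2*t - (n - Suc i)))"
    by (intro sum.cong) (auto simp: hh_def)
  also have "\<dots> = (\<Sum>d<n. real (2*t - d))" by (rule sum.nat_diff_reindex)
  finally show ?thesis .
qed

lemma hh_sym: "hh t i j = hh t j i" unfolding hh_def by auto

lemma S_step: "S_kt (Suc k) t = S_kt k t + (\<Sum>d<Suc k. real (2*t - d))"
proof -
  define K where "K = real k"
  define T where "T = real t"
  have sk: "real (Suc k) = K + 1" unfolding K_def by simp
  consider (a) "Suc k \<le> 2*t" | (b) "k = 2*t" | (c) "k > 2*t" by linarith
  then show ?thesis
  proof cases
    case a
    have e1: "S_kt (Suc k) t = (K+1) * (K+1+1) * (6*T+1-(K+1)) / 6"
      unfolding S_kt_def if_P[OF a] sk T_def ..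
    have e2: "S_kt k t = K * (K+1) * (6*T+1-K) / 6"
      using a unfolding S_kt_def K_def T_def by simp
    have e3: "(\<Sum>d<Suc k. real (2*t - d)) = (K+1) * (2*T) - (K+1) * (K+1-1)/2"
      unfolding G_closed if_P[OF a] sk T_def by simp
    show ?thesis unfolding e1 e2 e3 by (simp add: field_simps)
  next
    case b
    have a': "\<not> Suc k \<le> 2*t" using b by simp
    have e1: "S_kt (Suc k) t = T * (2*T+1) * (3*(K+1) - 2*T + 1) / 3"
      unfolding S_kt_def if_not_P[OF a'] sk T_def by simp
    have e2: "S_kt k t = K * (K+1) * (6*T+1-K) / 6"
      using b unfolding S_kt_def K_def T_def by simp
    have e3: "(\<Sum>d<Suc k. real (2*t - d)) = T * (2*T+1)"
      unfolding G_closed if_not_P[OF a'] T_def by simp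
    have KT: "K = 2*T" unfolding K_def T_def b by simp
    show ?thesis unfolding e1 e2 e3 KT by (simp add: field_simps)
  next
    case c
    have a': "\<not> Suc k \<le> 2*t" and a'': "\<not> k \<le> 2*t" using c by simp_all
    have e1: "S_kt (Suc k) t = T * (2*T+1) * (3*(K+1) - 2*T + 1) / 3"
      unfolding S_kt_def if_not_P[OF a'] sk T_def by simp
    have e2: "S_kt k t = T * (2*T+1) * (3*K - 2*T + 1) / 3"
      unfolding S_kt_def if_not_P[OF a''] K_def T_def by simp
    have e3: "(\<Sum>d<Suc k. real (2*t - d)) = T * (2*T+1)"
      unfolding G_closed if_not_P[OF a'] T_def by simp
    show ?thesis unfolding e1 e2 e3 by (simp add: field_simps)
  qed
qed

lemma T_id: "(\<Sum>i<Suc k. \<Sum>j<Suc k. hh t i j) = 2 * S_kt k t"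
proof (induction k)
  case 0 then show ?case by (simp add: hh_def S_kt_def)
next
  case (Suc k)
  have "(\<Sum>i<Suc (Suc k). \<Sum>j<Suc (Suc k). hh t i j)
     = (\<Sum>i<Suc k. \<Sum>j<Suc k. hh t i j) + (\<Sum>i<Suc k. hh t i (Suc k)) + (\<Sum>j<Suc k. hh t (Suc k) j) + hh t (Suc k) (Suc k)"
    by (simp add: sum.distrib)
  also have "(\<Sum>j<Suc k. hh t (Suc k) j) = (\<Sum>j<Suc k. hh t j (Suc k))" using hh_sym by simp
  also have "hh t (Suc k) (Suc k) = 0" by (simp add: hh_def)
  finally show ?case using Suc G_col[of t "Suc k"] S_step[of k t] by simp
qed



lemma lower:
  fixes p :: "'a::{finite,field} list \<Rightarrow> 'a list"
  assumes enc: "is_PT_encoding (weight_partition k :: 'a list set set) k t r p"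
  shows "2 * real CARD('a) * S_kt k t \<le> real r * (real ((k+1)^2 * (CARD('a) - 1))
             - real (((k+1) mod CARD('a)) * (CARD('a) - (k+1) mod CARD('a))))"
proof -
  define D where "D = real ((k+1)^2 * (CARD('a) - 1)) - real (((k+1) mod CARD('a)) * (CARD('a) - (k+1) mod CARD('a)))"
  define q where "q = real CARD('a)"
  have qpos: "q > 0" unfolding q_def by simp
  define x where "x i = p (stair k i :: 'a list)" for i
  have lx: "length (x i) = r" for i using enc unfolding is_PT_encoding_def x_def by simp
  have H: "hh t i j \<le> real (hamming_dist (x i) (x j))" if ij: "i \<le> k" "j \<le> k" for i j
  proof (cases "i = j")
    case True then show ?thesis by (simp add: hh_def)
  next
    case False
    have nb: "\<not> (\<exists>B\<in>weight_partition k. (stair k i :: 'a list) \<in> B \<and> stair k j \<in> B)"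
      using same_block[of "stair k i :: 'a list" k "stair k j"] stair_wt[OF ij(1), where 'a='a] stair_wt[OF ij(2), where 'a='a] False
      by simp
    have "2*t+1 \<le> hamming_dist ((stair k i :: 'a list) @ x i) (stair k j @ x j)"
      using enc nb unfolding is_PT_encoding_def x_def by simp
    also have "\<dots> = hamming_dist (stair k i :: 'a list) (stair k j) + hamming_dist (x i) (x j)"
      using lx by (intro hd_append) auto
    also have "hamming_dist (stair k i :: 'a list) (stair k j) = (if i \<le> j then j - i else i - j)"
    proof (cases "i \<le> j")
      case True then show ?thesis using stair_dist[OF True ij(2), where 'a='a] by simp
    next
      case False
      then have "j \<le> i" by simp
      then show ?thesis using stair_dist[OF \<open>j \<le> i\<close> ij(1), where 'a='a] hd_sym[of "stair k i :: 'a list" "stair k j"] False by simp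
    qed
    finally show ?thesis unfolding hh_def using False by simp
  qed
  have "2 * S_kt k t = (\<Sum>i<Suc k. \<Sum>j<Suc k. hh t i j)" by (rule T_id[symmetric])
  also have "\<dots> \<le> (\<Sum>i<Suc k. \<Sum>j<Suc k. real (hamming_dist (x i) (x j)))"
    by (intro sum_mono H) auto
  also have "\<dots> = (\<Sum>i<Suc k. \<Sum>j<Suc k. \<Sum>c<r. (if x i ! c \<noteq> x j ! c then 1 else 0 :: real))"
  proof (intro sum.cong refl)
    fix i j
    show "real (hamming_dist (x i) (x j)) = (\<Sum>c<r. (if x i ! c \<noteq> x j ! c then 1 else 0 :: real))"
      unfolding hd_sum lx of_nat_sum by (intro sum.cong) auto
  qed
  also have "\<dots> = (\<Sum>c<r. \<Sum>i<Suc k. \<Sum>j<Suc k. (if x i ! c \<noteq> x j ! c then 1 else 0 :: real))"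
    by (simp add: sum.swap[of _ "{..<r}"])
  also have "\<dots> \<le> (\<Sum>c<r. D / q)"
  proof (intro sum_mono)
    fix c
    have "q * (\<Sum>i<Suc k. \<Sum>j<Suc k. (if x i ! c \<noteq> x j ! c then 1 else 0 :: real)) \<le> D"
      using pair_count[of "\<lambda>i. x i ! c" "Suc k"] unfolding q_def D_def by simp
    then show "(\<Sum>i<Suc k. \<Sum>j<Suc k. (if x i ! c \<noteq> x j ! c then 1 else 0 :: real)) \<le> D / q"
      using qpos by (simp add: le_divide_eq mult.commute)
  qed
  also have "\<dots> = real r * D / q" by simp
  finally have "2 * S_kt k t \<le> real r * D / q" .
  then have "q * (2 * S_kt k t) \<le> real r * D" using qpos by (simp add: le_divide_eq mult.commute)
  then show ?thesis unfolding D_def q_def by (simp add: mult.assoc)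
qed



lemma code_exists:
  "\<exists>n (C::'a::zero_neq_one list set). C \<subseteq> {u. length u = n} \<and> card C = M \<and>
       (\<forall>x\<in>C. \<forall>y\<in>C. x \<noteq> y \<longrightarrow> d \<le> hamming_dist x y)"
proof -
  define n where "n = (d+1)*M"
  define C where "C = (\<lambda>i. stair n ((d+1)*i) :: 'a list) ` {..<M}"
  have dist: "d + 1 \<le> hamming_dist (stair n ((d+1)*i) :: 'a list) (stair n ((d+1)*j))"
    if "i < M" "j < M" "i \<noteq> j" for i j
  proof (cases "i < j")
    case True
    have "(d+1)*i \<le> (d+1)*j" using True by (intro mult_le_mono2) simp
    moreover have "(d+1)*j \<le> n" unfolding n_def using that by (intro mult_le_mono2) simp
    ultimately have "hamming_dist (stair n ((d+1)*i) :: 'a list) (stair n ((d+1)*j)) = (d+1)*j - (d+1)*i"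
      by (rule stair_dist)
    also have "\<dots> = (d+1)*(j-i)" by (simp add: diff_mult_distrib2)
    finally have h: "hamming_dist (stair n ((d+1)*i) :: 'a list) (stair n ((d+1)*j)) = (d+1)*(j-i)" .
    have "(d+1)*1 \<le> (d+1)*(j-i)" using True by (intro mult_le_mono2) simp
    then show ?thesis using h by simp
  next
    case False
    then have F: "j < i" using that by simp
    have "(d+1)*j \<le> (d+1)*i" using F by (intro mult_le_mono2) simp
    moreover have "(d+1)*i \<le> n" unfolding n_def using that by (intro mult_le_mono2) simp
    ultimately have "hamming_dist (stair n ((d+1)*j) :: 'a list) (stair n ((d+1)*i)) = (d+1)*i - (d+1)*j"
      by (rule stair_dist)
    also have "\<dots> = (d+1)*(i-j)" by (simp add: diff_mult_distrib2)
    finally have h: "hamming_dist (stair n ((d+1)*j) :: 'a list) (stair n ((d+1)*i)) = (d+1)*(i-j)" .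
    have "(d+1)*1 \<le> (d+1)*(i-j)" using F by (intro mult_le_mono2) simp
    then show ?thesis using h hd_sym[of "stair n ((d+1)*i) :: 'a list" "stair n ((d+1)*j)"] by simp
  qed
  have inj: "inj_on (\<lambda>i. stair n ((d+1)*i) :: 'a list) {..<M}"
  proof (rule inj_onI)
    fix i j assume "i \<in> {..<M}" "j \<in> {..<M}" and e: "(stair n ((d+1)*i) :: 'a list) = stair n ((d+1)*j)"
    show "i = j"
    proof (rule ccontr)
      assume "i \<noteq> j"
      then have "d + 1 \<le> hamming_dist (stair n ((d+1)*i) :: 'a list) (stair n ((d+1)*j))"
        using dist \<open>i \<in> {..<M}\<close> \<open>j \<in> {..<M}\<close> by simp
      then show False unfolding e hamming_dist_def by simp
    qed
  qed
  have "C \<subseteq> {u. length u = n}" unfolding C_def by auto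
  moreover have "card C = M" unfolding C_def using card_image[OF inj] by simp
  moreover have "\<forall>x\<in>C. \<forall>y\<in>C. x \<noteq> y \<longrightarrow> d \<le> hamming_dist x y"
  proof (intro ballI impI)
    fix x y assume "x \<in> C" "y \<in> C" "x \<noteq> y"
    then obtain i j where "i < M" "j < M" "x = stair n ((d+1)*i)" "y = stair n ((d+1)*j)" unfolding C_def by auto
    moreover then have "i \<noteq> j" using \<open>x \<noteq> y\<close> by auto
    ultimately show "d \<le> hamming_dist x y" using dist by fastforce
  qed
  ultimately show ?thesis by blast
qed

lemma mod_eq_far: "(a::nat) mod M = b mod M \<Longrightarrow> a < b \<Longrightarrow> a + M \<le> b"
proof -
  assume e: "a mod M = b mod M" and l: "a < b"
  have "M dvd (b - a)" using e l by (metis mod_eq_dvd_iff_nat nat_less_le)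
  then obtain c where c: "b - a = M * c" by (auto simp: dvd_def)
  have "b - a \<noteq> 0" using l by simp
  then have "c \<noteq> 0" using c by auto
  then have "M \<le> b - a" using c by simp
  then show ?thesis using l by linarith
qed

lemma upper_enc:
  fixes C :: "'a::field list set"
  assumes CS: "C \<subseteq> {u. length u = n}" and cC: "card C = M" and M: "M = min (2*t+1) (k+1)"
    and CD: "\<forall>x\<in>C. \<forall>y\<in>C. x \<noteq> y \<longrightarrow> 2*t \<le> hamming_dist x y"
  shows "\<exists>p. is_PT_encoding (weight_partition k :: 'a list set set) k t n p"
proof -
  have Mpos: "M > 0" using M by simp
  have fin: "finite C" using cC Mpos card_ge_0_finite by auto
  obtain g where g: "bij_betw g {0..<M} C" using ex_bij_betw_nat_finite[OF fin] cC by auto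
  define p where "p u = g (hamming_wt u mod M)" for u :: "'a list"
  have pC: "p u \<in> C" for u
  proof -
    have "g (hamming_wt u mod M) \<in> g ` {0..<M}" using Mpos by simp
    then show ?thesis unfolding p_def using bij_betw_imp_surj_on[OF g] by simp
  qed
  have "is_PT_encoding (weight_partition k :: 'a list set set) k t n p"
    unfolding is_PT_encoding_def
  proof (intro conjI allI impI)
    fix u :: "'a list" assume "length u = k"
    show "length (p u) = n" using pC CS by auto
  next
    fix u v :: "'a list"
    assume a: "length u = k \<and> length v = k \<and> \<not> (\<exists>B\<in>weight_partition k. u \<in> B \<and> v \<in> B)"
    then have lu: "length u = k" and lv: "length v = k" by auto
    have wne: "hamming_wt u \<noteq> hamming_wt v" using a same_block[OF lu lv] by simp
    have lp: "length (p u) = length (p v)" using pC[of u] pC[of v] CS by auto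
    have split: "hamming_dist (u @ p u) (v @ p v) = hamming_dist u v + hamming_dist (p u) (p v)"
      using lu lv lp by (intro hd_append) auto
    have d1: "hamming_wt u \<le> hamming_wt v + hamming_dist u v" using wt_le_dist[of u v] lu lv by simp
    have d2: "hamming_wt v \<le> hamming_wt u + hamming_dist u v"
      using wt_le_dist[of v u] hd_sym[of u v] lu lv by simp
    have wu: "hamming_wt u \<le> k" "hamming_wt v \<le> k" using wt_le_len lu lv by metis+
    show "2 * t + 1 \<le> hamming_dist (u @ p u) (v @ p v)"
    proof (cases "hamming_wt u mod M = hamming_wt v mod M")
      case True
      have far: "hamming_wt u + M \<le> hamming_wt v \<or> hamming_wt v + M \<le> hamming_wt u"
        using mod_eq_far[OF True] mod_eq_far[OF True[symmetric]] wne by linarith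
      then have "M \<noteq> k+1" using wu by auto
      then have "M = 2*t+1" using M by linarith
      then have "2*t+1 \<le> hamming_dist u v" using far d1 d2 by linarith
      then show ?thesis using split by simp
    next
      case False
      have "p u \<noteq> p v" unfolding p_def using False Mpos inj_on_eq_iff[OF bij_betw_imp_inj_on[OF g]] by simp
      then have "2*t \<le> hamming_dist (p u) (p v)" using CD pC by blast
      moreover have "1 \<le> hamming_dist u v" using d1 d2 wne by linarith
      ultimately show ?thesis using split by simp
    qed
  qed
  then show ?thesis by blast
qed

theorem corollary5:
  fixes k t :: nat
  assumes "0 < k" and "0 < t"
  shows "2 * real CARD('a) /
           (real ((k + 1)^2 * (CARD('a) - 1))
             - real (((k + 1) mod CARD('a)) * (CARD('a) - (k + 1) mod CARD('a))))
           * S_kt k t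
         \<le> real (r_P (weight_partition k :: 'a list set set) k t)
       \<and> r_P (weight_partition k :: 'a list set set) k t
         \<le> N_q TYPE('a::{finite,field}) (min (2 * t + 1) (k + 1)) (2 * t)"
proof -
  define M where "M = min (2 * t + 1) (k + 1)"
  define Nq where "Nq = N_q TYPE('a) M (2 * t)"
  have "\<exists>C :: 'a list set. C \<subseteq> {u. length u = Nq} \<and> card C = M \<and>
       (\<forall>x\<in>C. \<forall>y\<in>C. x \<noteq> y \<longrightarrow> 2 * t \<le> hamming_dist x y)"
    unfolding Nq_def N_q_def by (rule LeastI_ex) (use code_exists[where 'a='a] in blast)
  then obtain C :: "'a list set" where C: "C \<subseteq> {u. length u = Nq}" "card C = M"
     "\<forall>x\<in>C. \<forall>y\<in>C. x \<noteq> y \<longrightarrow> 2 * t \<le> hamming_dist x y" by blast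
  have ex: "\<exists>p. is_PT_encoding (weight_partition k :: 'a list set set) k t Nq p"
    by (rule upper_enc[OF C(1) C(2) M_def C(3)])
  have up: "r_P (weight_partition k :: 'a list set set) k t \<le> Nq"
    unfolding r_P_def by (rule Least_le) (rule ex)
  define r where "r = r_P (weight_partition k :: 'a list set set) k t"
  have "\<exists>p. is_PT_encoding (weight_partition k :: 'a list set set) k t r p"
    unfolding r_def r_P_def by (rule LeastI_ex) (rule exI, rule ex)
  then obtain p where p: "is_PT_encoding (weight_partition k :: 'a list set set) k t r p" by blast
  define q where "q = CARD('a)"
  define a where "a = (k+1) mod q"
  define D where "D = real ((k + 1)^2 * (q - 1)) - real (a * (q - a))"
  have low: "2 * real q * S_kt k t \<le> real r * D"
    using lower[OF p] unfolding D_def a_def q_def .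
  have q2: "q \<ge> 2"
  proof -
    have "card {0::'a, 1} \<le> q" unfolding q_def by (rule card_mono) auto
    then show ?thesis by simp
  qed
  have aq: "a < q" unfolding a_def using q2 by simp
  have ak: "a \<le> k + 1" unfolding a_def by simp
  have "a * (q - a) < (k+1)^2 * (q - 1)"
  proof (cases "a = 0")
    case True
    then show ?thesis using q2 by simp
  next
    case False
    have "a * (q - a) \<le> (k+1) * (q - 1)" using False ak by (intro mult_le_mono) auto
    also have "\<dots> < (k+1)^2 * (q - 1)"
    proof -
      have A: "(k+1)*(q-1) * 1 < ((k+1)*(q-1)) * (k+1)" using q2 assms(1) by (intro mult_strict_left_mono) auto
      have B: "((k+1)*(q-1)) * (k+1) = (k+1)^2 * (q - 1)" by (simp only: power2_eq_square mult.commute mult.left_commute)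
      show ?thesis using A unfolding B by simp
    qed
    finally show ?thesis .
  qed
  then have Dpos: "D > 0" unfolding D_def by linarith
  have "2 * real q / D * S_kt k t = (2 * real q * S_kt k t) / D" by simp
  also have "\<dots> \<le> real r" using low Dpos by (simp add: divide_le_eq mult.commute)
  finally have "2 * real q / D * S_kt k t \<le> real r" .
  then show ?thesis using up unfolding D_def a_def q_def r_def Nq_def M_def by simp
qed

end
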